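(* Let $d\ge 2$ and $x_0\in\mathbb{R}^d$. Then $$\{\text{block unimodal distributions on }\mathcal{D}_0\text{ about }x_0\}\subsetneq\{\text{OU distributions on }\mathcal{D}_0\text{ about }x_0\}\subsetneq\{\text{star unimodal distributions on }\mathcal{D}_0\text{ about }x_0\}.$$
   Context: $\mathcal{D}_0=\{x\in\mathbb{R}^d:x\ge x_0\}$ (componentwise). All convex hulls below are closed with respect to weak convergence, and uniform distributions are on sets of finite positive Lebesgue measure. A distribution on $\mathcal{D}_0$ is block unimodal about $x_0$ if it lies in the closed convex hull of the uniform distributions on rectangles contained in $\mathcal{D}_0$ that contain $x_0$ and have edges parallel to the coordinate axes. A set $K$ is star-shaped about $x_0$ if for each $x\in K$ the segment joining $x$ and $x_0$ lies in $K$; a distribution on $\mathcal{D}_0$ is star unimodal about $x_0$ if it lies in the closed convex hull of the uniform distributions on subsets of $\mathcal{D}_0$ that are star-shaped about $x_0$. A set $K\subset\mathcal{D}_0$ is OU about $x_0$ if $x\in K$ and $x\ge x'\ge x_0$ imply $x'\in K$; a distribution on $\mathcal{D}_0$ is OU about $x_0$ if it lies in the closed convex hull of the uniform distributions on subsets of $\mathcal{D}_0$ that are OU about $x_0$. *)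

theory Defs
  imports "HOL-Probability.Probability"
begin

type_synonym 'n pt = "real ^ 'n"

definition orthant :: "'n::finite pt \<Rightarrow> 'n pt set" where
  "orthant x0 = {x. \<forall>i. x0 $ i \<le> x $ i}"

definition distr_on :: "'n::finite pt \<Rightarrow> 'n pt measure \<Rightarrow> bool" where
  "distr_on x0 M \<longleftrightarrow> prob_space M \<and> sets M = sets borel \<and> measure M (orthant x0) = 1"

definition uniform_on :: "'n::finite pt set \<Rightarrow> 'n pt measure" where
  "uniform_on K = measure_of UNIV (sets borel)
      (\<lambda>A. emeasure lebesgue (A \<inter> K) / emeasure lebesgue K)"

definition admissible_set :: "'n::finite pt set \<Rightarrow> bool" where
  "admissible_set K \<longleftrightarrow> K \<in> sets lebesgue \<and> 0 < emeasure lebesgue K \<and> emeasure lebesgue K < \<infinity>"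

definition weak_conv :: "(nat \<Rightarrow> 'n::finite pt measure) \<Rightarrow> 'n pt measure \<Rightarrow> bool" where
  "weak_conv Ms M \<longleftrightarrow> (\<forall>f :: 'n pt \<Rightarrow> real. continuous_on UNIV f \<and> bounded (range f) \<longrightarrow>
      (\<lambda>k. integral\<^sup>L (Ms k) f) \<longlonglongrightarrow> integral\<^sup>L M f)"

definition mixtures :: "'n::finite pt measure set \<Rightarrow> 'n pt measure set" where
  "mixtures S = {N. prob_space N \<and> sets N = sets borel \<and>
      (\<exists>(k::nat) (c::nat \<Rightarrow> real) (Ms::nat \<Rightarrow> 'n pt measure).
         (\<forall>i<k. 0 \<le> c i \<and> Ms i \<in> S) \<and> (\<Sum>i<k. c i) = 1 \<and>
         (\<forall>A\<in>sets borel. measure N A = (\<Sum>i<k. c i * measure (Ms i) A)))}"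

text \<open>Closed convex hull w.r.t. weak convergence (the weak topology on probability
  measures on R^d is metrizable, so the closure is the sequential closure).\<close>
definition closed_hull :: "'n::finite pt measure set \<Rightarrow> 'n pt measure set" where
  "closed_hull S = {M. prob_space M \<and> sets M = sets borel \<and>
      (\<exists>Ms. (\<forall>k. Ms k \<in> mixtures S) \<and> weak_conv Ms M)}"

definition is_rectangle :: "'n::finite pt set \<Rightarrow> bool" where
  "is_rectangle R \<longleftrightarrow> (\<exists>a b. R = {x. \<forall>i. a $ i \<le> x $ i \<and> x $ i \<le> b $ i})"

definition star_shaped_about :: "'n::finite pt \<Rightarrow> 'n pt set \<Rightarrow> bool" where
  "star_shaped_about x0 K \<longleftrightarrow> (\<forall>x\<in>K. closed_segment x0 x \<subseteq> K)"

definition OU_set :: "'n::finite pt \<Rightarrow> 'n pt set \<Rightarrow> bool" where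
  "OU_set x0 K \<longleftrightarrow> K \<subseteq> orthant x0 \<and>
     (\<forall>x\<in>K. \<forall>x'. (\<forall>i. x0 $ i \<le> x' $ i \<and> x' $ i \<le> x $ i) \<longrightarrow> x' \<in> K)"

definition block_unimodal :: "'n::finite pt \<Rightarrow> 'n pt measure set" where
  "block_unimodal x0 = {M. distr_on x0 M \<and> M \<in> closed_hull
      (uniform_on ` {R. admissible_set R \<and> is_rectangle R \<and> R \<subseteq> orthant x0 \<and> x0 \<in> R})}"

definition star_unimodal :: "'n::finite pt \<Rightarrow> 'n pt measure set" where
  "star_unimodal x0 = {M. distr_on x0 M \<and> M \<in> closed_hull
      (uniform_on ` {K. admissible_set K \<and> K \<subseteq> orthant x0 \<and> star_shaped_about x0 K})}"

definition OU_unimodal :: "'n::finite pt \<Rightarrow> 'n pt measure set" where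
  "OU_unimodal x0 = {M. distr_on x0 M \<and> M \<in> closed_hull
      (uniform_on ` {K. admissible_set K \<and> OU_set x0 K})}"

end

theory Submission
  imports Defs
begin

lemma lebesgue_translate:
  fixes F :: "'a::euclidean_space \<Rightarrow> real"
  assumes F: "F \<in> borel_measurable lebesgue"
  shows "integral\<^sup>L lebesgue F = integral\<^sup>L lebesgue (\<lambda>x. F (t + x))"
    and "integrable lebesgue F \<longleftrightarrow> integrable lebesgue (\<lambda>x. F (t + x))"
proof -
  have eqT: "(\<lambda>x. t + (\<Sum>j\<in>Basis. (1 * (x \<bullet> j)) *\<^sub>R j)) = (\<lambda>x::'a. t + x)"
    by (simp add: euclidean_representation)
  have L: "lebesgue = distr lebesgue lebesgue (\<lambda>x::'a. t + x)"
    using lebesgue_affine_euclidean[of "\<lambda>_. 1" t] unfolding eqT by (simp add: density_1)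
  have M: "(\<lambda>x::'a. t + x) \<in> lebesgue \<rightarrow>\<^sub>M lebesgue"
    using lebesgue_affine_measurable[of "\<lambda>_. 1" t] unfolding eqT by simp
  show "integral\<^sup>L lebesgue F = integral\<^sup>L lebesgue (\<lambda>x. F (t + x))"
    by (subst L) (rule integral_distr[OF M F])
  show "integrable lebesgue F \<longleftrightarrow> integrable lebesgue (\<lambda>x. F (t + x))"
    by (subst L) (rule integrable_distr_eq[OF M F])
qed

lemma uniform_facts:
  fixes K :: "'n::finite pt set"
  assumes adm: "admissible_set K"
  shows "sets (uniform_on K) = sets borel" and "space (uniform_on K) = UNIV"
    and "\<And>A. A \<in> sets borel \<Longrightarrow> emeasure (uniform_on K) A = emeasure lebesgue (A \<inter> K) / emeasure lebesgue K"
    and "prob_space (uniform_on K)"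
proof -
  have K: "K \<in> sets lebesgue" and pos: "0 < emeasure lebesgue K" and fin: "emeasure lebesgue K < \<infinity>"
    using adm by (auto simp: admissible_set_def)
  define D where "D = density lebesgue (\<lambda>x. indicator K x / emeasure lebesgue K)"
  have Dm: "emeasure D A = emeasure lebesgue (A \<inter> K) / emeasure lebesgue K" if A: "A \<in> sets lebesgue" for A
  proof -
    have "emeasure D A = (\<integral>\<^sup>+x. indicator K x / emeasure lebesgue K * indicator A x \<partial>lebesgue)"
      unfolding D_def using A K by (subst emeasure_density) auto
    also have "\<dots> = (\<integral>\<^sup>+x. indicator (A \<inter> K) x / emeasure lebesgue K \<partial>lebesgue)"
      by (intro nn_integral_cong) (auto simp: indicator_def)
    also have "\<dots> = emeasure lebesgue (A \<inter> K) / emeasure lebesgue K"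
      using A K by (subst nn_integral_divide) auto
    finally show ?thesis .
  qed
  have bl: "A \<in> sets lebesgue" if "A \<in> sets borel" for A :: "'n pt set"
    by (rule sets_completionI_sets) (simp add: sets_lborel that)
  interpret sa: sigma_algebra UNIV "sets (borel :: 'n pt measure)"
    using sets.sigma_algebra_axioms[of "borel :: 'n pt measure"] by simp
  have ca: "countably_additive (sets borel) (\<lambda>A. emeasure lebesgue (A \<inter> K) / emeasure lebesgue K)"
    unfolding countably_additive_def
  proof (intro allI impI)
    fix A :: "nat \<Rightarrow> 'n pt set"
    assume a: "range A \<subseteq> sets borel" "disjoint_family A" "\<Union> (range A) \<in> sets borel"
    have "(\<Sum>i. emeasure D (A i)) = emeasure D (\<Union> (range A))"
      using emeasure_countably_additive[of D] a unfolding countably_additive_def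
      by (metis (no_types, lifting) D_def bl image_subset_iff sets_density)
    then show "(\<Sum>i. emeasure lebesgue (A i \<inter> K) / emeasure lebesgue K) =
        emeasure lebesgue (\<Union> (range A) \<inter> K) / emeasure lebesgue K"
      using a by (simp add: Dm bl image_subset_iff)
  qed
  have po: "positive (sets borel) (\<lambda>A. emeasure lebesgue (A \<inter> K) / emeasure lebesgue K)"
    by (simp add: positive_def)
  show S: "sets (uniform_on K) = sets borel"
    unfolding uniform_on_def by simp
  show Sp: "space (uniform_on K) = UNIV"
    unfolding uniform_on_def by simp
  show E: "emeasure (uniform_on K) A = emeasure lebesgue (A \<inter> K) / emeasure lebesgue K" if "A \<in> sets borel" for A
    unfolding uniform_on_def using that by (intro emeasure_measure_of_sigma sa.sigma_algebra_axioms po ca)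
  show "prob_space (uniform_on K)"
  proof (rule prob_spaceI)
    have "emeasure lebesgue K \<noteq> 0" "emeasure lebesgue K < top" using pos fin by auto
    then show "emeasure (uniform_on K) (space (uniform_on K)) = 1" by (simp add: Sp E)
  qed
qed


lemma borel_to_lebesgue:
  fixes g :: "'a::euclidean_space \<Rightarrow> real"
  assumes "g \<in> borel_measurable borel"
  shows "g \<in> borel_measurable lebesgue"
  by (rule measurable_completion) (simp only: measurable_lborel2 assms)

lemma dens_integral:
  fixes M :: "'a::euclidean_space measure" and f g :: "'a \<Rightarrow> real"
  assumes fM: "finite_measure M" and sM: "sets M = sets borel"
    and fm: "f \<in> borel_measurable lebesgue" and fi: "integrable lebesgue f" and f0: "\<And>x. 0 \<le> f x"
    and em: "\<And>A. A \<in> sets borel \<Longrightarrow> measure M A = (\<integral>x. f x * indicator A x \<partial>lebesgue)"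
    and g: "g \<in> borel_measurable borel"
  shows "integral\<^sup>L M g = (\<integral>x. f x * g x \<partial>lebesgue)"
proof -
  have bl: "A \<in> sets lebesgue" if "A \<in> sets borel" for A :: "'a set"
    by (rule sets_completionI_sets) (simp add: sets_lborel that)
  have spM: "space M = UNIV" using sets_eq_imp_space_eq[OF sM] by simp
  have "integral\<^sup>L M g = integral\<^sup>L (density lebesgue f) g"
  proof (rule integral_subalgebra)
    show "g \<in> borel_measurable M" by (subst measurable_cong_sets[OF sM refl]) (rule g)
    show "sets M \<subseteq> sets (density lebesgue (\<lambda>x. ennreal (f x)))"
      unfolding sets_density sM using bl by blast
    show "space M = space (density lebesgue (\<lambda>x. ennreal (f x)))" using spM by simp
    fix A assume A: "A \<in> sets M"
    then have Ab: "A \<in> sets borel" using sM by simp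
    have "emeasure M A = ennreal (measure M A)"
      using finite_measure.emeasure_eq_measure[OF fM] by simp
    also have "\<dots> = ennreal (\<integral>x. f x * indicator A x \<partial>lebesgue)" using em Ab by simp
    also have "\<dots> = (\<integral>\<^sup>+x. ennreal (f x * indicator A x) \<partial>lebesgue)"
      by (rule nn_integral_eq_integral[symmetric])
         (auto intro!: integrable_real_mult_indicator fi bl Ab simp: f0)
    also have "\<dots> = (\<integral>\<^sup>+x. ennreal (f x) * indicator A x \<partial>lebesgue)"
      by (intro nn_integral_cong) (auto simp: indicator_def)
    also have "\<dots> = emeasure (density lebesgue f) A"
      by (rule emeasure_density[symmetric]) (auto simp: fm bl Ab measurable_compose[OF fm measurable_ennreal])
    finally show "emeasure M A = emeasure (density lebesgue f) A" .
  qed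
  also have "\<dots> = (\<integral>x. f x *\<^sub>R g x \<partial>lebesgue)"
    by (rule integral_density) (auto simp: fm f0 borel_to_lebesgue[OF g])
  finally show ?thesis by simp
qed

lemma uniform_measure:
  fixes K :: "'n::finite pt set"
  assumes adm: "admissible_set K" and A: "A \<in> sets borel"
  shows "measure (uniform_on K) A = measure lebesgue (A \<inter> K) / measure lebesgue K"
proof -
  have K: "K \<in> sets lebesgue" and pos: "0 < emeasure lebesgue K" and fin: "emeasure lebesgue K < \<infinity>"
    using adm by (auto simp: admissible_set_def)
  have Al: "A \<in> sets lebesgue" by (rule sets_completionI_sets) (simp add: sets_lborel A)
  have eK: "emeasure lebesgue K = ennreal (measure lebesgue K)"
    using fin by (simp add: emeasure_eq_ennreal_measure)
  have eAK: "emeasure lebesgue (A \<inter> K) = ennreal (measure lebesgue (A \<inter> K))"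
  proof (rule emeasure_eq_ennreal_measure)
    have "emeasure lebesgue (A \<inter> K) \<le> emeasure lebesgue K" by (rule emeasure_mono) (auto simp: K)
    then show "emeasure lebesgue (A \<inter> K) \<noteq> top" using fin by (auto simp: top_unique)
  qed
  have mpos: "0 < measure lebesgue K" using pos unfolding eK by (simp add: ennreal_less_zero_iff)
  have "emeasure (uniform_on K) A = ennreal (measure lebesgue (A \<inter> K) / measure lebesgue K)"
    unfolding uniform_facts(3)[OF adm A] eK eAK using mpos by (intro divide_ennreal) simp_all
  then show ?thesis
    unfolding measure_def[of "uniform_on K"] using mpos by simp
qed


lemma ind_integrable:
  fixes g :: "'a::euclidean_space \<Rightarrow> real"
  assumes K: "K \<in> sets lebesgue" and fin: "emeasure lebesgue K < \<infinity>"
    and g: "g \<in> borel_measurable lebesgue" and gb: "\<And>x. \<bar>g x\<bar> \<le> B"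
  shows "integrable lebesgue (\<lambda>x. indicator K x * g x)"
proof (rule Bochner_Integration.integrable_bound[where f="\<lambda>x. B * indicator K x"])
  show "integrable lebesgue (\<lambda>x. B * indicator K x)"
  proof (rule integrable_mult_right)
    have "K \<inter> space lebesgue = K" by simp
    then show "integrable lebesgue (indicator K :: 'a \<Rightarrow> real)"
      using K fin by (simp only: integrable_indicator_iff)
  qed
  show "(\<lambda>x. indicator K x * g x) \<in> borel_measurable lebesgue"
    using K g by measurable
  show "AE x in lebesgue. norm (indicator K x * g x) \<le> norm (B * indicator K x)"
  proof (rule AE_I2)
    fix x
    have "0 \<le> B" using gb[of x] by linarith
    then show "norm (indicator K x * g x) \<le> norm (B * indicator K x)"
      using gb[of x] by (auto simp: indicator_def)
  qed
qed

lemma mixture_integral_nonneg: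
  fixes g :: "'n::finite pt \<Rightarrow> real"
  assumes N: "N \<in> mixtures (uniform_on ` G)" and adm: "\<And>K. K \<in> G \<Longrightarrow> admissible_set K"
    and pos: "\<And>K. K \<in> G \<Longrightarrow> 0 \<le> (\<integral>x. indicator K x * g x \<partial>lebesgue)"
    and g: "g \<in> borel_measurable borel" and gb: "\<And>x. \<bar>g x\<bar> \<le> B"
  shows "0 \<le> integral\<^sup>L N g"
proof -
  obtain k :: nat and c :: "nat \<Rightarrow> real" and Ms where Np: "prob_space N" "sets N = sets borel"
    and cM: "\<forall>i<k. 0 \<le> c i \<and> Ms i \<in> uniform_on ` G" and c1: "(\<Sum>i<k. c i) = 1"
    and mN: "\<forall>A\<in>sets borel. measure N A = (\<Sum>i<k. c i * measure (Ms i) A)"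
  proof -
    from N have "prob_space N \<and> sets N = sets borel \<and> (\<exists>(k::nat) (c::nat \<Rightarrow> real) (Ms::nat \<Rightarrow> 'n pt measure).
         (\<forall>i<k. 0 \<le> c i \<and> Ms i \<in> uniform_on ` G) \<and> (\<Sum>i<k. c i) = 1 \<and>
         (\<forall>A\<in>sets borel. measure N A = (\<Sum>i<k. c i * measure (Ms i) A)))"
      unfolding mixtures_def by (rule CollectD)
    then show ?thesis using that by blast
  qed
  have "\<forall>i. \<exists>K. i < k \<longrightarrow> K \<in> G \<and> Ms i = uniform_on K" using cM by blast
  then obtain Ks where Ks: "\<And>i. i < k \<Longrightarrow> Ks i \<in> G \<and> Ms i = uniform_on (Ks i)" by metis
  define m where "m i = measure lebesgue (Ks i)" for i
  have Kl: "Ks i \<in> sets lebesgue" and Kfin: "emeasure lebesgue (Ks i) < \<infinity>"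
    and Kpos: "0 < emeasure lebesgue (Ks i)" if "i < k" for i
    using adm[of "Ks i"] Ks[OF that] by (auto simp: admissible_set_def)
  have mpos: "0 < m i" if "i < k" for i
  proof -
    have "emeasure lebesgue (Ks i) = ennreal (m i)"
      using Kfin[OF that] unfolding m_def by (simp add: emeasure_eq_ennreal_measure)
    then show ?thesis using Kpos[OF that] by (simp add: ennreal_less_zero_iff)
  qed
  have c0: "0 \<le> c i" if "i < k" for i using cM that by auto
  define f where "f x = (\<Sum>i<k. c i * (indicator (Ks i) x / m i))" for x
  have gl: "g \<in> borel_measurable lebesgue" by (rule borel_to_lebesgue[OF g])
  have fm: "f \<in> borel_measurable lebesgue"
    unfolding f_def by (intro borel_measurable_sum borel_measurable_times borel_measurable_divide
        borel_measurable_const borel_measurable_indicator) (simp add: Kl)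
  have indint: "integrable lebesgue (\<lambda>x. indicator (Ks i) x * h x)"
    if "i < k" "h \<in> borel_measurable lebesgue" "\<And>x. \<bar>h x\<bar> \<le> C" for i and h :: "'n pt \<Rightarrow> real" and C :: real
    by (rule ind_integrable[where B=C]) (use Kl Kfin that in auto)
  have fi: "integrable lebesgue f"
    unfolding f_def
  proof (rule Bochner_Integration.integrable_sum)
    fix i assume "i \<in> {..<k}"
    then have "integrable lebesgue (\<lambda>x. indicator (Ks i) x * (\<lambda>_. c i / m i) x)"
      by (intro indint[where C="\<bar>c i / m i\<bar>"]) auto
    then show "integrable lebesgue (\<lambda>x. c i * (indicator (Ks i) x / m i))"
      by (simp add: field_simps)
  qed
  have f0: "0 \<le> f x" for x
    unfolding f_def using c0 mpos by (intro sum_nonneg) (auto simp: indicator_def less_imp_le)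
  have em: "measure N A = (\<integral>x. f x * indicator A x \<partial>lebesgue)" if A: "A \<in> sets borel" for A
  proof -
    have Al: "A \<in> sets lebesgue" by (rule sets_completionI_sets) (simp add: sets_lborel A)
    have "(\<integral>x. f x * indicator A x \<partial>lebesgue)
        = (\<integral>x. (\<Sum>i<k. c i / m i * (indicator (Ks i) x * indicator A x)) \<partial>lebesgue)"
      by (rule Bochner_Integration.integral_cong[OF refl]) (auto simp: f_def sum_distrib_right sum_distrib_left mult_ac intro!: sum.cong)
    also have "\<dots> = (\<Sum>i<k. (\<integral>x. c i / m i * (indicator (Ks i) x * indicator A x) \<partial>lebesgue))"
      by (intro Bochner_Integration.integral_sum integrable_mult_right indint[where C=1] borel_measurable_indicator Al)
         (auto simp: indicator_def)
    also have "\<dots> = (\<Sum>i<k. c i * measure (Ms i) A)"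
    proof (intro sum.cong refl)
      fix i assume i: "i \<in> {..<k}"
      have "(\<integral>x. c i / m i * (indicator (Ks i) x * indicator A x) \<partial>lebesgue)
          = c i / m i * (\<integral>x. indicator (A \<inter> Ks i) x \<partial>lebesgue)"
        by (simp add: indicator_inter_arith mult.commute)
      also have "\<dots> = c i / m i * measure lebesgue (A \<inter> Ks i)"
        by simp
      also have "\<dots> = c i * measure (Ms i) A"
        using Ks[of i] i uniform_measure[OF adm A, of "Ks i"] by (simp add: m_def)
      finally show "(\<integral>x. c i / m i * (indicator (Ks i) x * indicator A x) \<partial>lebesgue) = c i * measure (Ms i) A" .
    qed
    finally show ?thesis using mN A by simp
  qed
  have "integral\<^sup>L N g = (\<integral>x. f x * g x \<partial>lebesgue)"
    by (rule dens_integral[OF prob_space.finite_measure[OF Np(1)] Np(2) fm fi f0 em g])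
  also have "\<dots> = (\<integral>x. (\<Sum>i<k. c i / m i * (indicator (Ks i) x * g x)) \<partial>lebesgue)"
    by (rule Bochner_Integration.integral_cong[OF refl]) (auto simp: f_def sum_distrib_right sum_distrib_left mult_ac intro!: sum.cong)
  also have "\<dots> = (\<Sum>i<k. c i / m i * (\<integral>x. indicator (Ks i) x * g x \<partial>lebesgue))"
    by (subst Bochner_Integration.integral_sum) (auto intro!: integrable_mult_right indint[OF _ gl gb])
  also have "0 \<le> \<dots>"
    using c0 mpos pos Ks by (intro sum_nonneg mult_nonneg_nonneg divide_nonneg_nonneg) (auto simp: less_imp_le)
  finally show ?thesis by simp
qed


lemma hull_nonneg:
  fixes g :: "'n::finite pt \<Rightarrow> real"
  assumes M: "M \<in> closed_hull (uniform_on ` G)" and adm: "\<And>K. K \<in> G \<Longrightarrow> admissible_set K"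
    and pos: "\<And>K. K \<in> G \<Longrightarrow> 0 \<le> (\<integral>x. indicator K x * g x \<partial>lebesgue)"
    and gc: "continuous_on UNIV g" and gbd: "bounded (range g)"
  shows "0 \<le> integral\<^sup>L M g"
proof -
  obtain Ms where Ms: "\<And>k. Ms k \<in> mixtures (uniform_on ` G)" and wc: "weak_conv Ms M"
    using M unfolding closed_hull_def by blast
  obtain B where B: "\<And>x. \<bar>g x\<bar> \<le> B" using gbd unfolding bounded_iff by auto
  have g: "g \<in> borel_measurable borel" by (rule borel_measurable_continuous_onI[OF gc])
  have lim: "(\<lambda>k. integral\<^sup>L (Ms k) g) \<longlonglongrightarrow> integral\<^sup>L M g"
    using wc gc gbd unfolding weak_conv_def by blast
  show ?thesis
    by (rule LIMSEQ_le_const[OF lim]) (use mixture_integral_nonneg[OF Ms adm pos g B] in auto)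
qed

lemma uniform_in_hull:
  fixes K :: "'n::finite pt set"
  assumes adm: "admissible_set K" and KG: "K \<in> G"
  shows "uniform_on K \<in> closed_hull (uniform_on ` G)"
proof -
  have P: "prob_space (uniform_on K)" "sets (uniform_on K) = sets borel"
    using uniform_facts[OF adm] by auto
  have mix: "uniform_on K \<in> mixtures (uniform_on ` G)"
    unfolding mixtures_def
  proof (intro CollectI conjI exI)
    show "prob_space (uniform_on K)" "sets (uniform_on K) = sets borel" by (fact P)+
    show "\<forall>i<1::nat. 0 \<le> (\<lambda>_. 1::real) i \<and> (\<lambda>_. uniform_on K) i \<in> uniform_on ` G"
      using KG by auto
    show "(\<Sum>i<1::nat. (\<lambda>_. 1::real) i) = 1" by simp
    show "\<forall>A\<in>sets borel. measure (uniform_on K) A = (\<Sum>i<1::nat. (\<lambda>_. 1::real) i * measure ((\<lambda>_. uniform_on K) i) A)"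
      by simp
  qed
  show ?thesis
    unfolding closed_hull_def
  proof (intro CollectI conjI exI)
    show "prob_space (uniform_on K)" "sets (uniform_on K) = sets borel" by (fact P)+
    show "\<forall>k. (\<lambda>_. uniform_on K) k \<in> mixtures (uniform_on ` G)" using mix by simp
    show "weak_conv (\<lambda>_. uniform_on K) (uniform_on K)"
      unfolding weak_conv_def by simp
  qed
qed

lemma mixtures_mono: "S \<subseteq> T \<Longrightarrow> mixtures S \<subseteq> mixtures T"
  unfolding mixtures_def by blast

lemma closed_hull_mono: "S \<subseteq> T \<Longrightarrow> closed_hull S \<subseteq> closed_hull T"
proof -
  assume "S \<subseteq> T"
  then have "mixtures S \<subseteq> mixtures T" by (rule mixtures_mono)
  then show ?thesis unfolding closed_hull_def by blast
qed

definition bump :: "'a::euclidean_space \<Rightarrow> real" where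
  "bump y = max 0 (1/4 - norm y)"

lemma bump_cont: "continuous_on UNIV bump"
  unfolding bump_def by (intro continuous_intros)

lemma bump_nonneg: "0 \<le> bump y"
  unfolding bump_def by auto

lemma bump_le: "bump y \<le> 1/4"
  unfolding bump_def using norm_ge_zero[of y] by (simp add: max_def)

lemma bump_lebesgue: "bump \<in> borel_measurable lebesgue"
  by (rule borel_to_lebesgue[OF borel_measurable_continuous_onI[OF bump_cont]])

lemma bump_support: "bump (y :: 'n::finite pt) \<noteq> 0 \<Longrightarrow> \<bar>y $ k\<bar> < 1/4"
proof -
  assume "bump y \<noteq> 0"
  then have "norm y < 1/4" unfolding bump_def by (auto simp: max_def split: if_splits)
  then show ?thesis using component_le_norm_cart[of y k] by linarith
qed

lemma bump_integrable: "integrable lebesgue (bump :: 'a::euclidean_space \<Rightarrow> real)"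
proof -
  have "integrable lebesgue (\<lambda>x. indicator (cball (0::'a) 1) x * bump x)"
  proof (rule ind_integrable[where B="1/4"])
    show "cball (0::'a) 1 \<in> sets lebesgue" by (rule sets_completionI_sets) simp
    show "emeasure lebesgue (cball (0::'a) 1) < \<infinity>"
      using emeasure_bounded_finite[of "cball (0::'a) 1"] by simp
    show "bump \<in> borel_measurable lebesgue" by (rule bump_lebesgue)
    show "\<bar>bump x\<bar> \<le> 1/4" for x :: 'a using bump_nonneg[of x] bump_le[of x] by simp
  qed
  moreover have "indicator (cball (0::'a) 1) x * bump x = bump x" for x
    by (auto simp: indicator_def bump_def max_def dist_norm)
  ultimately show ?thesis by simp
qed

lemma bump_integral_pos: "0 < (\<integral>x. bump x \<partial>(lebesgue :: 'a::euclidean_space measure))"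
proof -
  have bl: "ball (0::'a) (1/8) \<in> sets lebesgue" by (rule sets_completionI_sets) simp
  have fin: "emeasure lebesgue (ball (0::'a) (1/8)) < \<infinity>"
    using emeasure_bounded_finite[of "ball (0::'a) (1/8)"] by simp
  have "0 < (1/8) * measure lebesgue (ball (0::'a) (1/8))"
    using content_ball_pos[of "1/8" "0::'a"] by simp
  also have "\<dots> = (\<integral>x. (1/8) * indicator (ball (0::'a) (1/8)) x \<partial>lebesgue)"
    by simp
  also have "\<dots> \<le> (\<integral>x. bump x \<partial>(lebesgue :: 'a measure))"
  proof (rule Bochner_Integration.integral_mono)
    show "integrable lebesgue (\<lambda>x. (1/8) * indicator (ball (0::'a) (1/8)) x :: real)"
      by (rule integrable_mult_right) (use bl fin in \<open>simp only: integrable_indicator_iff\<close>, simp)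
    show "integrable lebesgue (bump :: 'a \<Rightarrow> real)" by (rule bump_integrable)
    show "(1/8) * indicator (ball (0::'a) (1/8)) x \<le> bump x" for x
      by (auto simp: indicator_def bump_def)
  qed
  finally show ?thesis .
qed


lemma bump_borel: "bump \<in> borel_measurable borel"
  by (rule borel_measurable_continuous_onI[OF bump_cont])

lemma translate_piece:
  fixes K :: "'a::euclidean_space set" and p :: 'a
  assumes K: "K \<in> sets lebesgue" and fin: "emeasure lebesgue K < \<infinity>"
  shows "integrable lebesgue (\<lambda>x. indicator K x * bump (x - p))"
    and "integrable lebesgue (\<lambda>y. indicator K (p + y) * bump y)"
    and "(\<integral>x. indicator K x * bump (x - p) \<partial>lebesgue) = (\<integral>y. indicator K (p + y) * bump y \<partial>lebesgue)"
proof -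
  have bp: "(\<lambda>x. bump (x - p)) \<in> borel_measurable borel"
  proof -
    have "(\<lambda>x. x - p) \<in> borel_measurable borel" by simp
    from measurable_compose[OF this bump_borel] show ?thesis by (simp add: o_def)
  qed
  have F: "(\<lambda>x. indicator K x * bump (x - p)) \<in> borel_measurable lebesgue"
    by (intro borel_measurable_times borel_measurable_indicator K borel_to_lebesgue bp)
  show I1: "integrable lebesgue (\<lambda>x. indicator K x * bump (x - p))"
    by (rule ind_integrable[where B="1/4", OF K fin borel_to_lebesgue[OF bp]])
       (metis abs_of_nonneg bump_nonneg bump_le)
  have T: "integral\<^sup>L lebesgue (\<lambda>x. indicator K x * bump (x - p)) = integral\<^sup>L lebesgue (\<lambda>x. indicator K (p + x) * bump (p + x - p))"
      "integrable lebesgue (\<lambda>x. indicator K x * bump (x - p)) \<longleftrightarrow> integrable lebesgue (\<lambda>x. indicator K (p + x) * bump (p + x - p))"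
    using lebesgue_translate[OF F, of p] by simp_all
  show "integrable lebesgue (\<lambda>y. indicator K (p + y) * bump y)"
    using T(2) I1 by simp
  show "(\<integral>x. indicator K x * bump (x - p) \<partial>lebesgue) = (\<integral>y. indicator K (p + y) * bump y \<partial>lebesgue)"
    using T(1) by simp
qed

lemma test_formula:
  fixes K :: "'a::euclidean_space set" and P :: "nat \<Rightarrow> 'a" and w :: "nat \<Rightarrow> real"
  assumes K: "K \<in> sets lebesgue" and fin: "emeasure lebesgue K < \<infinity>"
  shows "(\<integral>x. indicator K x * (\<Sum>l<n. w l * bump (x - P l)) \<partial>lebesgue)
       = (\<integral>y. bump y * (\<Sum>l<n. w l * indicator K (P l + y)) \<partial>lebesgue)"
proof -
  have "(\<integral>x. indicator K x * (\<Sum>l<n. w l * bump (x - P l)) \<partial>lebesgue)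
      = (\<integral>x. (\<Sum>l<n. w l * (indicator K x * bump (x - P l))) \<partial>lebesgue)"
    by (rule Bochner_Integration.integral_cong[OF refl]) (simp add: sum_distrib_left mult_ac)
  also have "\<dots> = (\<Sum>l<n. w l * (\<integral>x. indicator K x * bump (x - P l) \<partial>lebesgue))"
    by (subst Bochner_Integration.integral_sum)
       (auto intro!: integrable_mult_right translate_piece(1)[OF K fin])
  also have "\<dots> = (\<Sum>l<n. w l * (\<integral>y. indicator K (P l + y) * bump y \<partial>lebesgue))"
    using translate_piece(3)[OF K fin] by simp
  also have "\<dots> = (\<integral>y. (\<Sum>l<n. w l * (indicator K (P l + y) * bump y)) \<partial>lebesgue)"
    by (subst Bochner_Integration.integral_sum)
       (auto intro!: integrable_mult_right translate_piece(2)[OF K fin])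
  also have "\<dots> = (\<integral>y. bump y * (\<Sum>l<n. w l * indicator K (P l + y)) \<partial>lebesgue)"
    by (rule Bochner_Integration.integral_cong[OF refl]) (simp only: sum_distrib_left mult.assoc mult.commute mult.left_commute)
  finally show ?thesis .
qed

lemma test_nonneg:
  fixes K :: "'a::euclidean_space set" and P :: "nat \<Rightarrow> 'a" and w :: "nat \<Rightarrow> real"
  assumes K: "K \<in> sets lebesgue" and fin: "emeasure lebesgue K < \<infinity>"
    and br: "\<And>y. bump y \<noteq> 0 \<Longrightarrow> 0 \<le> (\<Sum>l<n. w l * indicator K (P l + y))"
  shows "0 \<le> (\<integral>x. indicator K x * (\<Sum>l<n. w l * bump (x - P l)) \<partial>lebesgue)"
  unfolding test_formula[OF K fin]
proof (rule Bochner_Integration.integral_nonneg)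
  fix y
  show "0 \<le> bump y * (\<Sum>l<n. w l * indicator K (P l + y))"
    using br[of y] bump_nonneg[of y] by (cases "bump y = 0") auto
qed

lemma test_neg:
  fixes K :: "'a::euclidean_space set" and P :: "nat \<Rightarrow> 'a" and w :: "nat \<Rightarrow> real"
  assumes K: "K \<in> sets lebesgue" and fin: "emeasure lebesgue K < \<infinity>"
    and br: "\<And>y. bump y \<noteq> 0 \<Longrightarrow> (\<Sum>l<n. w l * indicator K (P l + y)) = -1"
  shows "(\<integral>x. indicator K x * (\<Sum>l<n. w l * bump (x - P l)) \<partial>lebesgue) < 0"
proof -
  have "(\<integral>x. indicator K x * (\<Sum>l<n. w l * bump (x - P l)) \<partial>lebesgue) = (\<integral>y. - bump y \<partial>(lebesgue :: 'a measure))"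
    unfolding test_formula[OF K fin]
  proof (rule Bochner_Integration.integral_cong[OF refl])
    fix y
    show "bump y * (\<Sum>l<n. w l * indicator K (P l + y)) = - bump y"
      using br[of y] by (cases "bump y = 0") auto
  qed
  also have "\<dots> < 0" using bump_integral_pos[where 'a='a] by simp
  finally show ?thesis .
qed


lemma admissible_intro:
  fixes K :: "'n::finite pt set"
  assumes Kb: "K \<in> sets borel" and sub: "K \<subseteq> cbox a b"
    and cK: "\<And>y. norm y < r \<Longrightarrow> c + y \<in> K" and r: "0 < r"
  shows "admissible_set K"
proof -
  have Kl: "K \<in> sets lebesgue" by (rule sets_completionI_sets) (simp add: Kb)
  have "emeasure lebesgue K \<le> emeasure lebesgue (cbox a b)"
    by (rule emeasure_mono[OF sub]) (rule sets_completionI_sets, simp)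
  also have "\<dots> < \<infinity>" using lmeasurable_cbox[of a b] by (simp add: fmeasurable_def)
  finally have fin: "emeasure lebesgue K < \<infinity>" .
  have bK: "ball c r \<subseteq> K"
  proof
    fix x assume "x \<in> ball c r"
    then have "norm (x - c) < r" by (simp add: dist_norm norm_minus_commute)
    from cK[OF this] show "x \<in> K" by simp
  qed
  have "0 < measure lebesgue (ball c r)"
    using content_ball_pos[OF r, of c] by simp
  moreover have "emeasure lebesgue (ball c r) = ennreal (measure lebesgue (ball c r))"
    using lmeasurable_ball[of c r] by (simp add: fmeasurable_def emeasure_eq_ennreal_measure)
  ultimately have "0 < emeasure lebesgue (ball c r)" by simp
  also have "\<dots> \<le> emeasure lebesgue K" by (rule emeasure_mono[OF bK Kl])
  finally show ?thesis unfolding admissible_set_def using Kl fin by simp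
qed

lemma norm_small: "norm (y :: 'n::finite pt) < r \<Longrightarrow> \<bar>y $ k\<bar> < r"
  using component_le_norm_cart[of y k] by linarith

lemma test_cont: "continuous_on UNIV (\<lambda>x. \<Sum>l<n. w l * bump (x - P l))"
proof -
  have "continuous_on UNIV (\<lambda>x. bump (x - P l))" for l
    by (rule continuous_on_compose2[OF bump_cont]) (auto intro: continuous_intros)
  then show ?thesis by (intro continuous_intros) auto
qed

lemma test_bounded: "bounded (range (\<lambda>x. \<Sum>l<n. w l * bump (x - P l)))"
  unfolding bounded_iff
proof (intro exI ballI)
  fix z assume "z \<in> range (\<lambda>x. \<Sum>l<n. w l * bump (x - P l))"
  then obtain x where z: "z = (\<Sum>l<n. w l * bump (x - P l))" by auto
  have "norm z \<le> (\<Sum>l<n. \<bar>w l * bump (x - P l)\<bar>)" unfolding z real_norm_def by (rule sum_abs)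
  also have "\<dots> \<le> (\<Sum>l<n. \<bar>w l\<bar> * (1/4))"
  proof (rule sum_mono)
    fix l
    have "\<bar>w l * bump (x - P l)\<bar> = \<bar>w l\<bar> * bump (x - P l)"
      by (simp add: abs_mult abs_of_nonneg bump_nonneg)
    also have "\<dots> \<le> \<bar>w l\<bar> * (1/4)"
      by (rule mult_left_mono[OF bump_le abs_ge_zero])
    finally show "\<bar>w l * bump (x - P l)\<bar> \<le> \<bar>w l\<bar> * (1/4)" .
  qed
  finally show "norm z \<le> (\<Sum>l<n. \<bar>w l\<bar> * (1/4))" .
qed

lemma orthant_borel: "orthant (x0 :: 'n::finite pt) \<in> sets borel"
  unfolding orthant_def by measurable



lemma uniform_integral:
  fixes K :: "'n::finite pt set"
  assumes adm: "admissible_set K" and g: "g \<in> borel_measurable borel" and gb: "\<And>x. \<bar>g x\<bar> \<le> B"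
  shows "integral\<^sup>L (uniform_on K) g = (\<integral>x. indicator K x * g x \<partial>lebesgue) / measure lebesgue K"
proof -
  have Kl: "K \<in> sets lebesgue" and Kfin: "emeasure lebesgue K < \<infinity>" and Kpos: "0 < emeasure lebesgue K"
    using adm by (auto simp: admissible_set_def)
  define m where "m = measure lebesgue K"
  have "emeasure lebesgue K = ennreal m"
    using Kfin unfolding m_def by (simp add: emeasure_eq_ennreal_measure)
  then have mpos: "0 < m" using Kpos by (simp add: ennreal_less_zero_iff)
  define f where "f x = indicator K x / m" for x
  have fm: "f \<in> borel_measurable lebesgue"
    unfolding f_def by (intro borel_measurable_divide borel_measurable_const borel_measurable_indicator Kl)
  have fi: "integrable lebesgue f"
  proof -
    have "integrable lebesgue (\<lambda>x. indicator K x * (\<lambda>_. 1 / m) x)"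
      by (rule ind_integrable[OF Kl Kfin, where B="1/m"]) (use mpos in auto)
    then show ?thesis unfolding f_def by simp
  qed
  have f0: "0 \<le> f x" for x unfolding f_def using mpos by (simp add: indicator_def)
  have em: "measure (uniform_on K) A = (\<integral>x. f x * indicator A x \<partial>lebesgue)" if A: "A \<in> sets borel" for A
  proof -
    have "(\<integral>x. f x * indicator A x \<partial>lebesgue) = (\<integral>x. indicator (A \<inter> K) x / m \<partial>lebesgue)"
      by (rule Bochner_Integration.integral_cong[OF refl]) (auto simp: f_def indicator_def)
    also have "\<dots> = measure lebesgue (A \<inter> K) / m" by simp
    finally show ?thesis using uniform_measure[OF adm A] by (simp add: m_def)
  qed
  have "integral\<^sup>L (uniform_on K) g = (\<integral>x. f x * g x \<partial>lebesgue)"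
    by (rule dens_integral[OF prob_space.finite_measure[OF uniform_facts(4)[OF adm]] uniform_facts(1)[OF adm] fm fi f0 em g])
  also have "\<dots> = (\<integral>x. (indicator K x * g x) / m \<partial>lebesgue)"
    by (rule Bochner_Integration.integral_cong[OF refl]) (simp add: f_def)
  also have "\<dots> = (\<integral>x. indicator K x * g x \<partial>lebesgue) / m" by simp
  finally show ?thesis by (simp add: m_def)
qed

lemma two_indices:
  assumes "CARD('n) \<ge> 2"
  obtains i j :: "'n::finite" where "i \<noteq> j"
proof -
  have "\<exists>i j :: 'n. i \<noteq> j"
  proof (rule ccontr)
    assume "\<not> ?thesis"
    then have "(UNIV :: 'n set) = {undefined}" by auto
    then have "card (UNIV :: 'n set) = card {undefined :: 'n}" by (simp only:)
    then have "CARD('n) = 1" by simp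
    with assms show False by simp
  qed
  then show ?thesis using that by blast
qed


definition qp :: "'n::finite pt \<Rightarrow> 'n \<Rightarrow> 'n \<Rightarrow> real \<Rightarrow> real \<Rightarrow> 'n pt" where
  "qp x0 i j s t = (\<chi> k. x0$k + 1/2 + (if k = i then s else 0) + (if k = j then t else 0))"

lemma qp_nth[simp]: "qp x0 i j s t $ k = x0$k + 1/2 + (if k = i then s else 0) + (if k = j then t else 0)"
  by (simp add: qp_def)

lemma qp_comp: "(qp x0 i j s t + y) $ k = x0$k + 1/2 + (if k = i then s else 0) + (if k = j then t else 0) + y$k"
  by (simp add: qp_def)

definition Lset :: "'n::finite pt \<Rightarrow> 'n \<Rightarrow> 'n \<Rightarrow> 'n pt set" where
  "Lset x0 i j = {x. (\<forall>k. x0$k \<le> x$k \<and> x$k \<le> x0$k + 2) \<and> (x$i \<le> x0$i + 1 \<or> x$j \<le> x0$j + 1)}"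

definition Sset :: "'n::finite pt \<Rightarrow> 'n \<Rightarrow> 'n \<Rightarrow> 'n pt set" where
  "Sset x0 i j = {x. (\<forall>k. x0$k \<le> x$k \<and> x$k \<le> x0$k + 3) \<and> x$j - x0$j \<le> x$i - x0$i}"

lemma sum4: "(\<Sum>l<(4::nat). F l) = F 0 + F 1 + F 2 + (F 3 :: real)"
  by (simp add: eval_nat_numeral lessThan_Suc add_ac)

lemma sum2: "(\<Sum>l<(2::nat). F l) = F 0 + (F 1 :: real)"
  by (simp add: eval_nat_numeral lessThan_Suc add_ac)

definition P1 :: "'n::finite pt \<Rightarrow> 'n \<Rightarrow> 'n \<Rightarrow> nat \<Rightarrow> 'n pt" where
  "P1 x0 i j l = (if l = 0 then qp x0 i j 0 0 else if l = 1 then qp x0 i j 1 0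
     else if l = 2 then qp x0 i j 0 1 else qp x0 i j 1 1)"

definition w1 :: "nat \<Rightarrow> real" where "w1 l = (if l = 0 \<or> l = 3 then 1 else -1)"

definition P2 :: "'n::finite pt \<Rightarrow> 'n \<Rightarrow> 'n \<Rightarrow> nat \<Rightarrow> 'n pt" where
  "P2 x0 i j l = (if l = 0 then qp x0 i j 0 1 else qp x0 i j 2 1)"

definition w2 :: "nat \<Rightarrow> real" where "w2 l = (if l = 0 then 1 else -1)"

lemma seg_comp:
  fixes x0 x z :: "'n::finite pt"
  assumes "z \<in> closed_segment x0 x"
  shows "\<exists>u. 0 \<le> u \<and> u \<le> 1 \<and> (\<forall>k. z$k = x0$k + u * (x$k - x0$k))"
proof -
  from assms obtain u where u: "0 \<le> u" "u \<le> 1" and z: "z = (1 - u) *\<^sub>R x0 + u *\<^sub>R x"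
    unfolding closed_segment_def by blast
  have "\<forall>k. z$k = x0$k + u * (x$k - x0$k)" unfolding z by (simp add: algebra_simps)
  with u show ?thesis by blast
qed

context
  fixes x0 :: "'n::finite pt" and i j :: 'n
  assumes ij: "i \<noteq> j"
begin

lemma qp_bounds:
  assumes yk: "\<And>k. \<bar>y$k\<bar> < 1/4" and s: "0 \<le> s" "s \<le> S" and t: "0 \<le> t" "t \<le> S"
  shows "x0$k < (qp x0 i j s t + y) $ k" and "(qp x0 i j s t + y) $ k < x0$k + S + 3/4"
  using yk[of k] s t ij unfolding qp_comp by (auto simp: abs_less_iff)

lemma L_facts:
  shows "Lset x0 i j \<in> sets borel" and "OU_set x0 (Lset x0 i j)" and "Lset x0 i j \<subseteq> orthant x0"
    and "admissible_set (Lset x0 i j)"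
proof -
  show Lb: "Lset x0 i j \<in> sets borel" unfolding Lset_def by measurable
  show Lo: "Lset x0 i j \<subseteq> orthant x0" unfolding Lset_def orthant_def by auto
  show "OU_set x0 (Lset x0 i j)" unfolding OU_set_def
  proof (intro conjI ballI allI impI Lo)
    fix x x' assume x: "x \<in> Lset x0 i j" and x': "\<forall>k. x0 $ k \<le> x' $ k \<and> x' $ k \<le> x $ k"
    show "x' \<in> Lset x0 i j"
      unfolding Lset_def
    proof (intro CollectI conjI allI)
      fix k
      have "x0$k \<le> x$k \<and> x$k \<le> x0$k + 2" using x unfolding Lset_def by blast
      then show "x0 $ k \<le> x' $ k" "x' $ k \<le> x0 $ k + 2"
        using x'[rule_format, of k] by linarith+
    next
      show "x' $ i \<le> x0 $ i + 1 \<or> x' $ j \<le> x0 $ j + 1"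
        using x'[rule_format, of i] x'[rule_format, of j] x unfolding Lset_def by force
    qed
  qed
  show "admissible_set (Lset x0 i j)"
  proof (rule admissible_intro[OF Lb, where a=x0 and b="\<chi> k. x0$k + 2" and r="1/4" and c="qp x0 i j 0 0"])
    show "Lset x0 i j \<subseteq> cbox x0 (\<chi> k. x0 $ k + 2)"
      unfolding Lset_def mem_box_cart by (auto simp: mem_box_cart)
    fix y :: "'n pt" assume "norm y < 1/4"
    then have yk: "\<And>k. \<bar>y$k\<bar> < 1/4" by (rule norm_small)
    show "qp x0 i j 0 0 + y \<in> Lset x0 i j"
      unfolding Lset_def
    proof (intro CollectI conjI allI)
      fix k show "x0 $ k \<le> (qp x0 i j 0 0 + y) $ k" "(qp x0 i j 0 0 + y) $ k \<le> x0 $ k + 2"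
        using qp_bounds[OF yk, of 0 1 0 k] by auto
    next
      show "(qp x0 i j 0 0 + y) $ i \<le> x0 $ i + 1 \<or> (qp x0 i j 0 0 + y) $ j \<le> x0 $ j + 1"
        using yk[of i] ij unfolding qp_comp by (auto simp: abs_less_iff)
    qed
  qed simp
qed


lemma S_facts:
  shows "Sset x0 i j \<in> sets borel" and "Sset x0 i j \<subseteq> orthant x0"
    and "star_shaped_about x0 (Sset x0 i j)" and "admissible_set (Sset x0 i j)"
proof -
  show Sb: "Sset x0 i j \<in> sets borel" unfolding Sset_def by measurable
  show "Sset x0 i j \<subseteq> orthant x0" unfolding Sset_def orthant_def by auto
  show "star_shaped_about x0 (Sset x0 i j)" unfolding star_shaped_about_def
  proof (intro ballI subsetI)
    fix x z assume x: "x \<in> Sset x0 i j" and z: "z \<in> closed_segment x0 x"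
    from seg_comp[OF z] obtain u where u: "0 \<le> u" "u \<le> 1" and zk: "\<And>k. z$k = x0$k + u * (x$k - x0$k)"
      by blast
    show "z \<in> Sset x0 i j" unfolding Sset_def
    proof (intro CollectI conjI allI)
      fix k
      have xk: "x0$k \<le> x$k \<and> x$k \<le> x0$k + 3" using x unfolding Sset_def by blast
      have "0 \<le> u * (x$k - x0$k)" using u xk by simp
      moreover have "u * (x$k - x0$k) \<le> 1 * 3"
        using u xk by (intro mult_mono) auto
      ultimately show "x0 $ k \<le> z $ k" "z $ k \<le> x0 $ k + 3" unfolding zk by linarith+
    next
      have "x$j - x0$j \<le> x$i - x0$i" using x unfolding Sset_def by blast
      then have "u * (x$j - x0$j) \<le> u * (x$i - x0$i)" using u by (intro mult_left_mono) auto
      then show "z $ j - x0 $ j \<le> z $ i - x0 $ i" unfolding zk by simp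
    qed
  qed
  show "admissible_set (Sset x0 i j)"
  proof (rule admissible_intro[OF Sb, where a=x0 and b="\<chi> k. x0$k + 3" and r="1/4" and c="qp x0 i j 2 1"])
    show "Sset x0 i j \<subseteq> cbox x0 (\<chi> k. x0 $ k + 3)"
      unfolding Sset_def by (auto simp: mem_box_cart)
    fix y :: "'n pt" assume "norm y < 1/4"
    then have yk: "\<And>k. \<bar>y$k\<bar> < 1/4" by (rule norm_small)
    show "qp x0 i j 2 1 + y \<in> Sset x0 i j"
      unfolding Sset_def
    proof (intro CollectI conjI allI)
      fix k show "x0 $ k \<le> (qp x0 i j 2 1 + y) $ k" "(qp x0 i j 2 1 + y) $ k \<le> x0 $ k + 3"
        using qp_bounds[OF yk, of 2 2 1 k] by auto
    next
      show "(qp x0 i j 2 1 + y) $ j - x0 $ j \<le> (qp x0 i j 2 1 + y) $ i - x0 $ i"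
        using yk[of i] yk[of j] ij unfolding qp_comp by (auto simp: abs_less_iff)
    qed
  qed simp
qed

lemma L_bracket:
  assumes "bump y \<noteq> 0"
  shows "(\<Sum>l<4. w1 l * indicator (Lset x0 i j) (P1 x0 i j l + y)) = -1"
proof -
  have yk: "\<And>k. \<bar>y$k\<bar> < 1/4" using bump_support[OF assms] .
  have in00: "qp x0 i j 0 0 + y \<in> Lset x0 i j" and in10: "qp x0 i j 1 0 + y \<in> Lset x0 i j"
    and in01: "qp x0 i j 0 1 + y \<in> Lset x0 i j" and out11: "qp x0 i j 1 1 + y \<notin> Lset x0 i j"
  proof -
    have B: "x0$k \<le> (qp x0 i j s t + y) $ k \<and> (qp x0 i j s t + y) $ k \<le> x0$k + 2"
      if "0 \<le> s" "s \<le> 1" "0 \<le> t" "t \<le> 1" for s t k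
      using qp_bounds(1)[OF yk that, of k] qp_bounds(2)[OF yk that, of k] by linarith
    have M: "qp x0 i j s t + y \<in> Lset x0 i j"
      if "0 \<le> s" "s \<le> 1" "0 \<le> t" "t \<le> 1" "s = 0 \<or> t = 0" for s t
      unfolding Lset_def
    proof (intro CollectI conjI allI)
      fix k show "x0 $ k \<le> (qp x0 i j s t + y) $ k" "(qp x0 i j s t + y) $ k \<le> x0 $ k + 2"
        using B[OF that(1-4), of k] by auto
    next
      show "(qp x0 i j s t + y) $ i \<le> x0 $ i + 1 \<or> (qp x0 i j s t + y) $ j \<le> x0 $ j + 1"
        using yk[of i] yk[of j] ij that(5) by (auto simp: abs_less_iff)
    qed
    show "qp x0 i j 0 0 + y \<in> Lset x0 i j" by (rule M) auto
    show "qp x0 i j 1 0 + y \<in> Lset x0 i j" by (rule M) auto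
    show "qp x0 i j 0 1 + y \<in> Lset x0 i j" by (rule M) auto
    have "\<not> ((qp x0 i j 1 1 + y) $ i \<le> x0 $ i + 1 \<or> (qp x0 i j 1 1 + y) $ j \<le> x0 $ j + 1)"
      using yk[of i] yk[of j] ij by (auto simp: abs_less_iff)
    then show "qp x0 i j 1 1 + y \<notin> Lset x0 i j" unfolding Lset_def by blast
  qed
  show ?thesis unfolding sum4 using in00 in10 in01 out11 by (simp add: P1_def w1_def)
qed

lemma S_bracket:
  assumes "bump y \<noteq> 0"
  shows "(\<Sum>l<2. w2 l * indicator (Sset x0 i j) (P2 x0 i j l + y)) = -1"
proof -
  have yk: "\<And>k. \<bar>y$k\<bar> < 1/4" using bump_support[OF assms] .
  have "qp x0 i j 2 1 + y \<in> Sset x0 i j"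
    unfolding Sset_def
  proof (intro CollectI conjI allI)
    fix k show "x0 $ k \<le> (qp x0 i j 2 1 + y) $ k" "(qp x0 i j 2 1 + y) $ k \<le> x0 $ k + 3"
      using qp_bounds[OF yk, of 2 2 1 k] by auto
  next
    show "(qp x0 i j 2 1 + y) $ j - x0 $ j \<le> (qp x0 i j 2 1 + y) $ i - x0 $ i"
      using yk[of i] yk[of j] ij unfolding qp_comp by (auto simp: abs_less_iff)
  qed
  moreover have "qp x0 i j 0 1 + y \<notin> Sset x0 i j"
    unfolding Sset_def using yk[of i] yk[of j] ij by (auto simp: qp_comp abs_less_iff)
  ultimately show ?thesis unfolding sum2 by (simp add: P2_def w2_def)
qed

lemma OU_bracket:
  assumes K: "OU_set x0 K" and "bump y \<noteq> 0"
  shows "0 \<le> (\<Sum>l<2. w2 l * indicator K (P2 x0 i j l + y))"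
proof -
  have yk: "\<And>k. \<bar>y$k\<bar> < 1/4" using bump_support[OF assms(2)] .
  have "qp x0 i j 0 1 + y \<in> K" if "qp x0 i j 2 1 + y \<in> K"
  proof -
    have "\<forall>k. x0 $ k \<le> (qp x0 i j 0 1 + y) $ k \<and> (qp x0 i j 0 1 + y) $ k \<le> (qp x0 i j 2 1 + y) $ k"
    proof
      fix k show "x0 $ k \<le> (qp x0 i j 0 1 + y) $ k \<and> (qp x0 i j 0 1 + y) $ k \<le> (qp x0 i j 2 1 + y) $ k"
        using yk[of k] ij by (auto simp: abs_less_iff)
    qed
    then show ?thesis using K that unfolding OU_set_def by blast
  qed
  then show ?thesis unfolding sum2 by (auto simp: P2_def w2_def indicator_def)
qed

lemma rect_bracket:
  assumes R: "is_rectangle R" and x0R: "x0 \<in> R" and "bump y \<noteq> 0"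
  shows "0 \<le> (\<Sum>l<4. w1 l * indicator R (P1 x0 i j l + y))"
proof -
  have yk: "\<And>k. \<bar>y$k\<bar> < 1/4" using bump_support[OF assms(3)] .
  obtain a b where Rab: "R = {x. \<forall>k. a $ k \<le> x $ k \<and> x $ k \<le> b $ k}"
    using R unfolding is_rectangle_def by blast
  have ax: "a$k \<le> x0$k" for k using x0R unfolding Rab by blast
  define C where "C = (\<forall>k. k \<noteq> i \<longrightarrow> k \<noteq> j \<longrightarrow> x0$k + 1/2 + y$k \<le> b$k)"
  have mem: "(qp x0 i j s t + y \<in> R) \<longleftrightarrow>
      (x0$i + 1/2 + s + y$i \<le> b$i \<and> x0$j + 1/2 + t + y$j \<le> b$j \<and> C)"
    if "0 \<le> s" "0 \<le> t" for s t
  proof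
    assume m: "qp x0 i j s t + y \<in> R"
    then have mk: "\<And>k. (qp x0 i j s t + y) $ k \<le> b$k" unfolding Rab by blast
    have "C" unfolding C_def
    proof (intro allI impI)
      fix k assume "k \<noteq> i" "k \<noteq> j"
      then show "x0$k + 1/2 + y$k \<le> b$k" using mk[of k] unfolding qp_comp by simp
    qed
    then show "x0$i + 1/2 + s + y$i \<le> b$i \<and> x0$j + 1/2 + t + y$j \<le> b$j \<and> C"
      using mk[of i] mk[of j] ij unfolding qp_comp by auto
  next
    assume h: "x0$i + 1/2 + s + y$i \<le> b$i \<and> x0$j + 1/2 + t + y$j \<le> b$j \<and> C"
    show "qp x0 i j s t + y \<in> R" unfolding Rab
    proof (intro CollectI allI conjI)
      fix k
      show "a $ k \<le> (qp x0 i j s t + y) $ k"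
        using ax[of k] yk[of k] that unfolding qp_comp by (auto simp: abs_less_iff)
      have hC: "x0$k + 1/2 + y$k \<le> b$k" if "k \<noteq> i" "k \<noteq> j"
        using h that unfolding C_def by blast
      show "(qp x0 i j s t + y) $ k \<le> b $ k"
      proof (cases "k = i")
        case True then show ?thesis using h ij by simp
      next
        case False
        show ?thesis
        proof (cases "k = j")
          case True then show ?thesis using h ij by simp
        next
          case F2: False then show ?thesis using hC[OF False F2] False by simp
        qed
      qed
    qed
  qed
  define A0 where "A0 = (x0$i + 1/2 + 0 + y$i \<le> b$i)"
  define A1 where "A1 = (x0$i + 1/2 + 1 + y$i \<le> b$i)"
  define B0 where "B0 = (x0$j + 1/2 + 0 + y$j \<le> b$j)"
  define B1 where "B1 = (x0$j + 1/2 + 1 + y$j \<le> b$j)"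
  have A10: "A1 \<Longrightarrow> A0" and B10: "B1 \<Longrightarrow> B0" unfolding A0_def A1_def B0_def B1_def by linarith+
  have i00: "indicator R (qp x0 i j 0 0 + y) = (if A0 \<and> B0 \<and> C then 1 else (0::real))"
    using mem[of 0 0] unfolding A0_def B0_def by (simp add: indicator_def)
  have i10: "indicator R (qp x0 i j 1 0 + y) = (if A1 \<and> B0 \<and> C then 1 else (0::real))"
    using mem[of 1 0] unfolding A1_def B0_def by (simp add: indicator_def)
  have i01: "indicator R (qp x0 i j 0 1 + y) = (if A0 \<and> B1 \<and> C then 1 else (0::real))"
    using mem[of 0 1] unfolding A0_def B1_def by (simp add: indicator_def)
  have i11: "indicator R (qp x0 i j 1 1 + y) = (if A1 \<and> B1 \<and> C then 1 else (0::real))"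
    using mem[of 1 1] unfolding A1_def B1_def by (simp add: indicator_def)
  have "(\<Sum>l<4. w1 l * indicator R (P1 x0 i j l + y)) =
      indicator R (qp x0 i j 0 0 + y) - indicator R (qp x0 i j 1 0 + y)
      - indicator R (qp x0 i j 0 1 + y) + indicator R (qp x0 i j 1 1 + y)"
    unfolding sum4 by (simp add: P1_def w1_def)
  also have "\<dots> \<ge> 0" unfolding i00 i10 i01 i11
    using A10 B10 by (cases A0; cases A1; cases B0; cases B1; cases C) simp_all
  finally show ?thesis .
qed

end


lemma adm_measure_pos: "admissible_set K \<Longrightarrow> 0 < measure lebesgue (K :: 'n::finite pt set)"
proof -
  assume adm: "admissible_set K"
  then have Kfin: "emeasure lebesgue K < \<infinity>" and Kpos: "0 < emeasure lebesgue K"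
    by (auto simp: admissible_set_def)
  have "emeasure lebesgue K = ennreal (measure lebesgue K)"
    using Kfin by (simp add: emeasure_eq_ennreal_measure)
  then show ?thesis using Kpos by (simp add: ennreal_less_zero_iff)
qed

lemma uniform_distr_on:
  fixes K :: "'n::finite pt set"
  assumes adm: "admissible_set K" and Ko: "K \<subseteq> orthant x0"
  shows "distr_on x0 (uniform_on K)"
proof -
  have "measure (uniform_on K) (orthant x0) = measure lebesgue (orthant x0 \<inter> K) / measure lebesgue K"
    by (rule uniform_measure[OF adm orthant_borel])
  also have "orthant x0 \<inter> K = K" using Ko by blast
  finally have "measure (uniform_on K) (orthant x0) = 1"
    using adm_measure_pos[OF adm] by simp
  then show ?thesis unfolding distr_on_def using uniform_facts[OF adm] by simp
qed

lemma rect_OU: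
  assumes R: "is_rectangle R" and x0R: "x0 \<in> R" and Ro: "R \<subseteq> orthant x0"
  shows "OU_set x0 R"
proof -
  obtain a b where Rab: "R = {x. \<forall>k. a $ k \<le> x $ k \<and> x $ k \<le> b $ k}"
    using R unfolding is_rectangle_def by blast
  show ?thesis unfolding OU_set_def
  proof (intro conjI Ro ballI allI impI)
    fix x x' assume x: "x \<in> R" and x': "\<forall>k. x0 $ k \<le> x' $ k \<and> x' $ k \<le> x $ k"
    show "x' \<in> R" unfolding Rab
    proof (intro CollectI allI)
      fix k
      have "a $ k \<le> x0 $ k" using x0R unfolding Rab by blast
      moreover have "x $ k \<le> b $ k" using x unfolding Rab by blast
      ultimately show "a $ k \<le> x' $ k \<and> x' $ k \<le> b $ k" using x'[rule_format, of k] by linarith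
    qed
  qed
qed

lemma OU_star:
  assumes K: "OU_set x0 K"
  shows "K \<subseteq> orthant x0" and "star_shaped_about x0 K"
proof -
  show Ko: "K \<subseteq> orthant x0" using K unfolding OU_set_def by blast
  show "star_shaped_about x0 K" unfolding star_shaped_about_def
  proof (intro ballI subsetI)
    fix x z assume x: "x \<in> K" and z: "z \<in> closed_segment x0 x"
    from seg_comp[OF z] obtain u where u: "0 \<le> u" "u \<le> 1" and zk: "\<And>k. z$k = x0$k + u * (x$k - x0$k)"
      by blast
    have "\<forall>k. x0 $ k \<le> z $ k \<and> z $ k \<le> x $ k"
    proof
      fix k
      have xk: "x0 $ k \<le> x $ k" using Ko x unfolding orthant_def by blast
      have "0 \<le> u * (x$k - x0$k)" using u xk by simp
      moreover have "u * (x$k - x0$k) \<le> 1 * (x$k - x0$k)" using u xk by (intro mult_right_mono) auto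
      ultimately show "x0 $ k \<le> z $ k \<and> z $ k \<le> x $ k" unfolding zk by simp
    qed
    then show "z \<in> K" using K x unfolding OU_set_def by blast
  qed
qed

theorem mainTheorem4:
  fixes x0 :: "real ^ 'n"
  assumes "CARD('n) \<ge> 2"
  shows "block_unimodal x0 \<subset> OU_unimodal x0 \<and> OU_unimodal x0 \<subset> star_unimodal x0"
proof -
  obtain i j :: 'n where ij: "i \<noteq> j" using two_indices[OF assms] by blast
  define GB where "GB = {R. admissible_set R \<and> is_rectangle R \<and> R \<subseteq> orthant x0 \<and> x0 \<in> R}"
  define GO where "GO = {K. admissible_set K \<and> OU_set x0 K}"
  define GS where "GS = {K. admissible_set K \<and> K \<subseteq> orthant x0 \<and> star_shaped_about x0 K}"
  have BO: "GB \<subseteq> GO" unfolding GB_def GO_def using rect_OU by blast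
  have OS: "GO \<subseteq> GS" unfolding GO_def GS_def using OU_star by blast
  have sub1: "block_unimodal x0 \<subseteq> OU_unimodal x0"
    unfolding block_unimodal_def OU_unimodal_def
    using closed_hull_mono[OF image_mono[OF BO, of uniform_on]] unfolding GB_def GO_def by blast
  have sub2: "OU_unimodal x0 \<subseteq> star_unimodal x0"
    unfolding OU_unimodal_def star_unimodal_def
    using closed_hull_mono[OF image_mono[OF OS, of uniform_on]] unfolding GO_def GS_def by blast
  define L where "L = Lset x0 i j"
  have Ladm: "admissible_set L" and LOU: "OU_set x0 L" and Lo: "L \<subseteq> orthant x0"
    using L_facts[OF ij] unfolding L_def by auto
  have Lin: "uniform_on L \<in> OU_unimodal x0"
    unfolding OU_unimodal_def
    using uniform_distr_on[OF Ladm Lo] uniform_in_hull[OF Ladm, of GO] Ladm LOU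
    unfolding GO_def by blast
  define g1 where "g1 x = (\<Sum>l<4. w1 l * bump (x - P1 x0 i j l))" for x
  have g1c: "continuous_on UNIV g1" unfolding g1_def by (rule test_cont)
  have g1b: "bounded (range g1)" unfolding g1_def by (rule test_bounded)
  obtain B1 where B1: "\<And>x. \<bar>g1 x\<bar> \<le> B1" using g1b unfolding bounded_iff by auto
  have Lnot: "uniform_on L \<notin> block_unimodal x0"
  proof
    assume "uniform_on L \<in> block_unimodal x0"
    then have H: "uniform_on L \<in> closed_hull (uniform_on ` GB)"
      unfolding block_unimodal_def GB_def by blast
    have "0 \<le> integral\<^sup>L (uniform_on L) g1"
    proof (rule hull_nonneg[OF H _ _ g1c g1b])
      fix K assume "K \<in> GB"
      then have Kadm: "admissible_set K" and Kr: "is_rectangle K" and K0: "x0 \<in> K"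
        unfolding GB_def by auto
      then have Kl: "K \<in> sets lebesgue" and Kf: "emeasure lebesgue K < \<infinity>"
        by (auto simp: admissible_set_def)
      show "0 \<le> (\<integral>x. indicator K x * g1 x \<partial>lebesgue)"
        unfolding g1_def by (rule test_nonneg[OF Kl Kf rect_bracket[OF ij Kr K0]])
    qed (auto simp: GB_def)
    also have "integral\<^sup>L (uniform_on L) g1 = (\<integral>x. indicator L x * g1 x \<partial>lebesgue) / measure lebesgue L"
      by (rule uniform_integral[OF Ladm borel_measurable_continuous_onI[OF g1c] B1])
    also have "\<dots> < 0"
    proof (rule divide_neg_pos)
      have Ll: "L \<in> sets lebesgue" and Lf: "emeasure lebesgue L < \<infinity>"
        using Ladm by (auto simp: admissible_set_def)
      show "(\<integral>x. indicator L x * g1 x \<partial>lebesgue) < 0"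
        unfolding g1_def by (rule test_neg[OF Ll Lf]) (unfold L_def, rule L_bracket[OF ij])
      show "0 < measure lebesgue L" by (rule adm_measure_pos[OF Ladm])
    qed
    finally show False by simp
  qed
  define S where "S = Sset x0 i j"
  have Sadm: "admissible_set S" and So: "S \<subseteq> orthant x0" and Sst: "star_shaped_about x0 S"
    using S_facts[OF ij] unfolding S_def by auto
  have Sin: "uniform_on S \<in> star_unimodal x0"
    unfolding star_unimodal_def
    using uniform_distr_on[OF Sadm So] uniform_in_hull[OF Sadm, of GS] Sadm So Sst
    unfolding GS_def by blast
  define g2 where "g2 x = (\<Sum>l<2. w2 l * bump (x - P2 x0 i j l))" for x
  have g2c: "continuous_on UNIV g2" unfolding g2_def by (rule test_cont)
  have g2b: "bounded (range g2)" unfolding g2_def by (rule test_bounded)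
  obtain B2 where B2: "\<And>x. \<bar>g2 x\<bar> \<le> B2" using g2b unfolding bounded_iff by auto
  have Snot: "uniform_on S \<notin> OU_unimodal x0"
  proof
    assume "uniform_on S \<in> OU_unimodal x0"
    then have H: "uniform_on S \<in> closed_hull (uniform_on ` GO)"
      unfolding OU_unimodal_def GO_def by blast
    have "0 \<le> integral\<^sup>L (uniform_on S) g2"
    proof (rule hull_nonneg[OF H _ _ g2c g2b])
      fix K assume "K \<in> GO"
      then have Kadm: "admissible_set K" and KO: "OU_set x0 K"
        unfolding GO_def by auto
      then have Kl: "K \<in> sets lebesgue" and Kf: "emeasure lebesgue K < \<infinity>"
        by (auto simp: admissible_set_def)
      show "0 \<le> (\<integral>x. indicator K x * g2 x \<partial>lebesgue)"
        unfolding g2_def by (rule test_nonneg[OF Kl Kf OU_bracket[OF ij KO]])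
    qed (auto simp: GO_def)
    also have "integral\<^sup>L (uniform_on S) g2 = (\<integral>x. indicator S x * g2 x \<partial>lebesgue) / measure lebesgue S"
      by (rule uniform_integral[OF Sadm borel_measurable_continuous_onI[OF g2c] B2])
    also have "\<dots> < 0"
    proof (rule divide_neg_pos)
      have Sl: "S \<in> sets lebesgue" and Sf: "emeasure lebesgue S < \<infinity>"
        using Sadm by (auto simp: admissible_set_def)
      show "(\<integral>x. indicator S x * g2 x \<partial>lebesgue) < 0"
        unfolding g2_def by (rule test_neg[OF Sl Sf]) (unfold S_def, rule S_bracket[OF ij])
      show "0 < measure lebesgue S" by (rule adm_measure_pos[OF Sadm])
    qed
    finally show False by simp
  qed
  show ?thesis using sub1 sub2 Lin Lnot Sin Snot by blast
qed

end
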